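(* Let $G$ be a finite graph, let $C$ be a proper coloring of $G$ with exactly $\chi(G)$ colors, and let $C_1$ be one color class of $C$. Let $\mathcal{G}\le \mathrm{Aut}(G)$ be the subgroup of all automorphisms $A$ with $A(C_1)=C_1$ (setwise), and assume $|\mathcal{G}|\ge 2$; let $r$ be the least prime dividing $|\mathcal{G}|$. For $A\in\mathcal{G}$ let $\theta_A$ be the number of distinct orbits of the cyclic group $\langle A\rangle$ on $C_1$. If for some integer $t\ge 2$ $$\sum_{A\in\mathcal{G}} t^{\theta_A-|C_1|}<r,$$ then $\chi_D(G)\le \chi(G)+t-1$. In particular, with $F(C_1):=\max_{A\in\mathcal{G},\,A\neq I}|\{v\in C_1: A(v)=v\}|$, if $F(C_1)<|C_1|-2\log_t|\mathcal{G}|$ for some integer $t\ge2$, then $\chi_D(G)\le\chi(G)+t-1$.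
   Context: For a graph $G$, a coloring of $V(G)$ is distinguishing if the only automorphism of $G$ that maps every color class onto itself (setwise) is the identity. The distinguishing chromatic number $\chi_D(G)$ is the minimum number of colors in a coloring of $G$ that is both proper and distinguishing. $\chi(G)$ is the chromatic number. *)

theory Defs
  imports Complex_Main "HOL-Computational_Algebra.Primes"
begin

definition graph :: "'a set \<Rightarrow> ('a \<Rightarrow> 'a \<Rightarrow> bool) \<Rightarrow> bool" where
  "graph V E \<longleftrightarrow> finite V \<and> (\<forall>u v. E u v \<longrightarrow> u \<in> V \<and> v \<in> V)
     \<and> (\<forall>u v. E u v \<longrightarrow> E v u) \<and> (\<forall>u. \<not> E u u)"

definition aut :: "'a set \<Rightarrow> ('a \<Rightarrow> 'a \<Rightarrow> bool) \<Rightarrow> ('a \<Rightarrow> 'a) set" where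
  "aut V E = {f. bij_betw f V V \<and> (\<forall>x. x \<notin> V \<longrightarrow> f x = x)
     \<and> (\<forall>u\<in>V. \<forall>v\<in>V. E u v \<longleftrightarrow> E (f u) (f v))}"

definition proper_coloring :: "'a set \<Rightarrow> ('a \<Rightarrow> 'a \<Rightarrow> bool) \<Rightarrow> ('a \<Rightarrow> nat) \<Rightarrow> bool" where
  "proper_coloring V E c \<longleftrightarrow> (\<forall>u\<in>V. \<forall>v\<in>V. E u v \<longrightarrow> c u \<noteq> c v)"

definition color_class :: "'a set \<Rightarrow> ('a \<Rightarrow> nat) \<Rightarrow> nat \<Rightarrow> 'a set" where
  "color_class V c i = {v \<in> V. c v = i}"

definition num_colors :: "'a set \<Rightarrow> ('a \<Rightarrow> nat) \<Rightarrow> nat" where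
  "num_colors V c = card (c ` V)"

definition distinguishing :: "'a set \<Rightarrow> ('a \<Rightarrow> 'a \<Rightarrow> bool) \<Rightarrow> ('a \<Rightarrow> nat) \<Rightarrow> bool" where
  "distinguishing V E c \<longleftrightarrow>
     (\<forall>f \<in> aut V E. (\<forall>i \<in> c ` V. f ` color_class V c i = color_class V c i) \<longrightarrow> f = id)"

definition chromatic_number :: "'a set \<Rightarrow> ('a \<Rightarrow> 'a \<Rightarrow> bool) \<Rightarrow> nat" where
  "chromatic_number V E = (LEAST k. \<exists>c. proper_coloring V E c \<and> num_colors V c = k)"

definition dist_chromatic_number :: "'a set \<Rightarrow> ('a \<Rightarrow> 'a \<Rightarrow> bool) \<Rightarrow> nat" where
  "dist_chromatic_number V E =
     (LEAST k. \<exists>c. proper_coloring V E c \<and> distinguishing V E c \<and> num_colors V c = k)"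

definition num_orbits :: "('a \<Rightarrow> 'a) \<Rightarrow> 'a set \<Rightarrow> nat" where
  "num_orbits A S = card {{(A ^^ k) x | k. True} | x. x \<in> S}"

end

theory Submission imports Defs "HOL-Algebra.Coset" "HOL-Library.Infinite_Set" begin

definition GG :: "('a\<Rightarrow>'a) set \<Rightarrow> ('a\<Rightarrow>'a) monoid" where
  "GG S = \<lparr>carrier = S, mult = (\<circ>), one = id\<rparr>"

lemma pow_closed:
  assumes "id \<in> S" "\<And>f g. f \<in> S \<Longrightarrow> g \<in> S \<Longrightarrow> f \<circ> g \<in> S" "f \<in> S"
  shows "f ^^ k \<in> S"
  by (induction k) (use assms in \<open>auto simp del: comp_apply simp: id_def[symmetric]\<close>)

lemma pow_id:
  assumes "finite S" "id \<in> S" "\<And>f g. f \<in> S \<Longrightarrow> g \<in> S \<Longrightarrow> f \<circ> g \<in> S" "f \<in> S" "bij f"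
  shows "\<exists>n>0. f ^^ n = id"
proof -
  have "range (\<lambda>k. f ^^ k) \<subseteq> S" using pow_closed[OF assms(2,3,4)] by auto
  hence "finite (range (\<lambda>k. f ^^ k))" using assms(1) finite_subset by blast
  hence "\<not> inj (\<lambda>k. f ^^ k)" using range_inj_infinite by blast
  then obtain m n where mn: "m \<noteq> n" "f ^^ m = f ^^ n" unfolding inj_def by blast
  have "\<exists>m n. m < n \<and> f ^^ m = f ^^ n"
    using mn by (metis linorder_neqE_nat)
  then obtain m n where mn: "m < n" "f ^^ m = f ^^ n" by blast
  have eq: "f ^^ (n - m) \<circ> f ^^ m = f ^^ m"
    using mn by (metis funpow_add le_add_diff_inverse2 less_imp_le)
  have s: "surj (f ^^ m)" using bij_fn[OF assms(5)] bij_is_surj by blast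
  have "f ^^ (n - m) = id"
  proof
    fix x
    obtain y where "x = (f ^^ m) y" using s by (metis surjD)
    thus "(f ^^ (n - m)) x = id x" using eq by (metis comp_apply id_apply)
  qed
  thus ?thesis using mn(1) by (intro exI[of _ "n-m"]) auto
qed

lemma group_GG:
  assumes "finite S" "id \<in> S" "\<And>f g. f \<in> S \<Longrightarrow> g \<in> S \<Longrightarrow> f \<circ> g \<in> S" "\<And>f. f \<in> S \<Longrightarrow> bij f"
  shows "group (GG S)"
proof (rule groupI)
  fix x assume x: "x \<in> carrier (GG S)"
  then obtain n where n: "n > 0" "x ^^ n = id" using pow_id[OF assms(1,2,3)] assms(4) by (auto simp: GG_def)
  have "x ^^ (n - 1) \<in> S" using pow_closed[OF assms(2,3)] x by (auto simp: GG_def)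
  moreover have "x ^^ (n - 1) \<circ> x = id" using n by (metis Suc_diff_1 funpow_Suc_right)
  ultimately show "\<exists>y\<in>carrier (GG S). y \<otimes>\<^bsub>GG S\<^esub> x = \<one>\<^bsub>GG S\<^esub>" by (auto simp: GG_def)
qed (auto simp: GG_def assms)


lemma aut_bij: "f \<in> aut V E \<Longrightarrow> bij f"
proof -
  assume f: "f \<in> aut V E"
  hence b: "bij_betw f V V" and o: "\<And>x. x \<notin> V \<Longrightarrow> f x = x" by (auto simp: aut_def)
  show "bij f"
  proof (rule bijI)
    show "inj f"
    proof (rule injI)
      fix x y assume e: "f x = f y"
      show "x = y"
      proof (cases "x \<in> V"; cases "y \<in> V")
        assume "x \<in> V" "y \<in> V" thus ?thesis using e b by (metis bij_betw_iff_bijections)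
      next
        assume "x \<in> V" "y \<notin> V" thus ?thesis using e b o by (metis bij_betwE)
      next
        assume "x \<notin> V" "y \<in> V" thus ?thesis using e b o by (metis bij_betwE)
      next
        assume "x \<notin> V" "y \<notin> V" thus ?thesis using e o by metis
      qed
    qed
    show "surj f"
    proof -
      have "y \<in> range f" for y
      proof (cases "y \<in> V")
        case True thus ?thesis using b by (metis bij_betw_imp_surj_on imageE rangeI)
      next
        case False thus ?thesis using o by (metis rangeI)
      qed
      thus ?thesis by blast
    qed
  qed
qed

lemma id_aut: "id \<in> aut V E"
  by (auto simp: aut_def)

lemma aut_comp: "f \<in> aut V E \<Longrightarrow> g \<in> aut V E \<Longrightarrow> f \<circ> g \<in> aut V E"
  unfolding aut_def
  apply (auto intro: bij_betw_trans)
   apply (metis bij_betwE)+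
  done


context
  fixes V :: "'a set" and E :: "'a \<Rightarrow> 'a \<Rightarrow> bool" and c :: "'a \<Rightarrow> nat" and i :: nat
    and C1 :: "'a set" and G :: "('a \<Rightarrow> 'a) set" and r :: nat
  assumes gr: "graph V E"
    and pc: "proper_coloring V E c"
    and iV: "i \<in> c ` V"
    and C1_def: "C1 = color_class V c i"
    and G_def: "G = {A \<in> aut V E. A ` C1 = C1}"
    and r_def: "r = (LEAST p::nat. prime p \<and> p dvd card G)"
    and cG: "card G \<ge> 2"
begin

lemma finV: "finite V" using gr by (simp add: graph_def)
lemma C1V: "C1 \<subseteq> V" by (auto simp: C1_def color_class_def)
lemma finC1: "finite C1" using finV C1V finite_subset by blast
lemma finG: "finite G" using cG by (metis card.infinite not_numeral_le_zero)
lemma idG: "id \<in> G" by (simp add: G_def id_aut)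
lemma compG: "f \<in> G \<Longrightarrow> g \<in> G \<Longrightarrow> f \<circ> g \<in> G"
proof -
  assume f: "f \<in> G" and g: "g \<in> G"
  have F: "f \<in> aut V E" "f ` C1 = C1" using f unfolding G_def by simp_all
  have Gg: "g \<in> aut V E" "g ` C1 = C1" using g unfolding G_def by simp_all
  have "(f \<circ> g) ` C1 = f ` (g ` C1)" by (rule image_comp[symmetric])
  also have "\<dots> = C1" using F(2) Gg(2) by simp
  finally have "(f \<circ> g) ` C1 = C1" .
  moreover have "f \<circ> g \<in> aut V E" using aut_comp[OF F(1) Gg(1)] .
  ultimately show ?thesis unfolding G_def by simp
qed

lemma bijG: "f \<in> G \<Longrightarrow> bij f" by (auto simp: G_def aut_bij)

lemma grpG: "group (GG G)"
  using group_GG[OF finG idG compG bijG] .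

lemma powC1: "A \<in> G \<Longrightarrow> v \<in> C1 \<Longrightarrow> (A ^^ k) v \<in> C1"
proof (induction k)
  case 0 thus ?case by simp
next
  case (Suc k)
  hence "A ((A ^^ k) v) \<in> A ` C1" by blast
  moreover have "A ` C1 = C1" using Suc.prems unfolding G_def by blast
  ultimately show ?case by simp
qed

definition Stab :: "('a \<Rightarrow> nat) \<Rightarrow> ('a \<Rightarrow> 'a) set" where
  "Stab col = {A \<in> G. \<forall>v\<in>C1. col (A v) = col v}"

lemma Stab_subgroup: "subgroup (Stab col) (GG G)"
proof (rule group.subgroupI[OF grpG])
  show "Stab col \<subseteq> carrier (GG G)" by (auto simp: Stab_def GG_def)
  show "Stab col \<noteq> {}" using idG by (auto simp: Stab_def)
  show "a \<otimes>\<^bsub>GG G\<^esub> b \<in> Stab col" if "a \<in> Stab col" "b \<in> Stab col" for a b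
  proof -
    have ab: "a \<in> G" "b \<in> G" using that by (auto simp: Stab_def)
    have "col (a (b v)) = col v" if v: "v \<in> C1" for v
    proof -
      have "b v \<in> C1" using powC1[OF ab(2) v, of 1] by simp
      have "col (a (b v)) = col (b v)" using \<open>a \<in> Stab col\<close> \<open>b v \<in> C1\<close> unfolding Stab_def by blast
      moreover have "col (b v) = col v" using \<open>b \<in> Stab col\<close> v unfolding Stab_def by blast
      ultimately show ?thesis by simp
    qed
    thus ?thesis using compG[OF ab] by (auto simp: Stab_def GG_def)
  qed
  show "inv\<^bsub>GG G\<^esub> a \<in> Stab col" if a: "a \<in> Stab col" for a
  proof -
    have aG: "a \<in> carrier (GG G)" using a by (auto simp: Stab_def GG_def)
    have iG: "inv\<^bsub>GG G\<^esub> a \<in> G" using group.inv_closed[OF grpG aG] by (simp add: GG_def)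
    have ri: "a \<circ> inv\<^bsub>GG G\<^esub> a = id" using group.r_inv[OF grpG aG] by (simp add: GG_def)
    have "col ((inv\<^bsub>GG G\<^esub> a) v) = col v" if v: "v \<in> C1" for v
    proof -
      have w: "(inv\<^bsub>GG G\<^esub> a) v \<in> C1" using iG v by (auto simp: G_def)
      have "col (a ((inv\<^bsub>GG G\<^esub> a) v)) = col ((inv\<^bsub>GG G\<^esub> a) v)" using a w by (auto simp: Stab_def)
      moreover have "a ((inv\<^bsub>GG G\<^esub> a) v) = v" using ri by (metis comp_apply id_apply)
      ultimately show ?thesis by simp
    qed
    thus ?thesis using iG by (auto simp: Stab_def)
  qed
qed

lemma Stab_dvd: "card (Stab col) dvd card G"
  using group.lagrange[OF grpG Stab_subgroup[of col]] by (simp add: order_def GG_def) (metis dvd_triv_right)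

lemma r_prime: "prime r \<and> r dvd card G"
proof -
  obtain p where "prime p" "p dvd card G" using prime_factor_nat[of "card G"] cG by auto
  thus ?thesis unfolding r_def using LeastI[of "\<lambda>p. prime p \<and> p dvd card G" p] by blast
qed

lemma Stab_big:
  assumes "A \<in> Stab col" "A \<noteq> id"
  shows "r \<le> card (Stab col)"
proof -
  have fin: "finite (Stab col)" using finG by (auto simp: Stab_def)
  have "id \<in> Stab col" using idG by (auto simp: Stab_def)
  hence "{id, A} \<subseteq> Stab col" using assms by auto
  hence "2 \<le> card (Stab col)" 
  proof -
    have "card {id, A} = 2" using assms(2) by simp
    thus ?thesis using card_mono[OF fin \<open>{id, A} \<subseteq> Stab col\<close>] by simp
  qed
  then obtain p where p: "prime p" "p dvd card (Stab col)" using prime_factor_nat[of "card (Stab col)"] by auto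
  hence "p dvd card G" using Stab_dvd dvd_trans by blast
  hence "r \<le> p" using p(1) unfolding r_def by (simp add: Least_le)
  moreover have "p \<le> card (Stab col)" using p(2) \<open>2 \<le> card (Stab col)\<close> by (simp add: dvd_imp_le)
  ultimately show ?thesis by simp
qed


definition Cols :: "nat \<Rightarrow> ('a \<Rightarrow> nat) set" where
  "Cols t = PiE C1 (\<lambda>_. {..<t})"

definition Fix :: "nat \<Rightarrow> ('a \<Rightarrow> 'a) \<Rightarrow> ('a \<Rightarrow> nat) set" where
  "Fix t A = {col \<in> Cols t. \<forall>v\<in>C1. col (A v) = col v}"

lemma finCols: "finite (Cols t)" by (simp add: Cols_def finC1 finite_PiE)

lemma card_Cols: "card (Cols t) = t ^ card C1"
  by (simp add: Cols_def card_PiE finC1)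

lemma orb_const:
  assumes "A \<in> G" "col \<in> Fix t A" "v \<in> C1"
  shows "col ((A ^^ k) v) = col v"
proof (induction k)
  case 0 thus ?case by simp
next
  case (Suc k)
  have "(A ^^ k) v \<in> C1" using powC1[OF assms(1,3)] .
  hence "col (A ((A ^^ k) v)) = col ((A ^^ k) v)" using assms(2) unfolding Fix_def by blast
  thus ?case using Suc.IH by simp
qed

lemma card_Fix:
  assumes A: "A \<in> G"
  shows "card (Fix t A) \<le> t ^ num_orbits A C1"
proof -
  define Orb where "Orb = {{(A ^^ k) x | k. True} | x. x \<in> C1}"
  have finO: "finite Orb" unfolding Orb_def using finC1 by simp
  define ph :: "('a \<Rightarrow> nat) \<Rightarrow> 'a set \<Rightarrow> nat" where "ph = (\<lambda>col. \<lambda>Q\<in>Orb. col (SOME x. x \<in> Q))"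
  have some: "(SOME y. y \<in> {(A ^^ k) x | k. True}) \<in> {(A ^^ k) x | k. True}" for x
    by (rule someI[of _ x]) (auto intro: exI[of _ 0])
  have maps: "ph ` Fix t A \<subseteq> PiE Orb (\<lambda>_. {..<t})"
  proof
    fix g assume "g \<in> ph ` Fix t A"
    then obtain col where col: "col \<in> Fix t A" "g = ph col" by blast
    have "col (SOME y. y \<in> Q) \<in> {..<t}" if QQ: "Q \<in> Orb" for Q
    proof -
      obtain x where x: "x \<in> C1" "Q = {(A ^^ k) x | k. True}" using QQ unfolding Orb_def by blast
      obtain k where "(SOME y. y \<in> Q) = (A ^^ k) x" using some[of x] x(2) by blast
      hence "(SOME y. y \<in> Q) \<in> C1" using powC1[OF A x(1)] by simp
      thus ?thesis using col(1) unfolding Fix_def Cols_def by blast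
    qed
    thus "g \<in> PiE Orb (\<lambda>_. {..<t})" using col(2) unfolding ph_def by auto
  qed
  have inj: "inj_on ph (Fix t A)"
  proof
    fix c1 c2 assume c: "c1 \<in> Fix t A" "c2 \<in> Fix t A" "ph c1 = ph c2"
    show "c1 = c2"
    proof (rule PiE_ext)
      show "c1 \<in> PiE C1 (\<lambda>_. {..<t})" "c2 \<in> PiE C1 (\<lambda>_. {..<t})" using c unfolding Fix_def Cols_def by auto
      fix v assume v: "v \<in> C1"
      define Q where "Q = {(A ^^ k) v | k. True}"
      have OO: "Q \<in> Orb" using v unfolding Q_def Orb_def by blast
      obtain k where k: "(SOME y. y \<in> Q) = (A ^^ k) v" using some[of v] unfolding Q_def by blast
      have "ph c1 Q = ph c2 Q" using c(3) by simp
      hence "c1 ((A ^^ k) v) = c2 ((A ^^ k) v)" using OO k unfolding ph_def by simp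
      thus "c1 v = c2 v" using orb_const[OF A c(1) v] orb_const[OF A c(2) v] by simp
    qed
  qed
  have "card (Fix t A) \<le> card (PiE Orb (\<lambda>_. {..<t}))"
    using card_inj_on_le[OF inj maps] finO by (simp add: finite_PiE)
  also have "\<dots> = t ^ card Orb" using finO by (simp add: card_PiE)
  finally show ?thesis unfolding num_orbits_def Orb_def .
qed

lemma card_filter_sum: "finite S \<Longrightarrow> card {x \<in> S. P x} = (\<Sum>x\<in>S. if P x then 1 else 0::nat)"
  by (simp add: sum.If_cases Int_def)

lemma double_count: "(\<Sum>A\<in>G. card (Fix t A)) = (\<Sum>col\<in>Cols t. card (Stab col))"
proof -
  have "(\<Sum>A\<in>G. card (Fix t A)) = (\<Sum>A\<in>G. \<Sum>col\<in>Cols t. if (\<forall>v\<in>C1. col (A v) = col v) then 1 else 0)"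
    unfolding Fix_def using finCols by (simp add: card_filter_sum)
  also have "\<dots> = (\<Sum>col\<in>Cols t. \<Sum>A\<in>G. if (\<forall>v\<in>C1. col (A v) = col v) then 1 else 0)"
    by (rule sum.swap)
  also have "\<dots> = (\<Sum>col\<in>Cols t. card (Stab col))"
    unfolding Stab_def using finG by (simp add: card_filter_sum)
  finally show ?thesis .
qed


lemma exists_good:
  assumes t: "t \<ge> 2"
    and S: "(\<Sum>A\<in>G. real t powi (int (num_orbits A C1) - int (card C1))) < real r"
  shows "\<exists>col\<in>Cols t. \<forall>A\<in>Stab col. A = id"
proof (rule ccontr)
  assume "\<not> ?thesis"
  hence bad: "\<forall>col\<in>Cols t. \<exists>A\<in>Stab col. A \<noteq> id" by blast
  have "r * t ^ card C1 = (\<Sum>col\<in>Cols t. r)" by (simp add: card_Cols)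
  also have "\<dots> \<le> (\<Sum>col\<in>Cols t. card (Stab col))"
    by (rule sum_mono) (use bad Stab_big in blast)
  also have "\<dots> = (\<Sum>A\<in>G. card (Fix t A))" by (rule double_count[symmetric])
  also have "\<dots> \<le> (\<Sum>A\<in>G. t ^ num_orbits A C1)" by (rule sum_mono) (rule card_Fix)
  finally have "real (r * t ^ card C1) \<le> real (\<Sum>A\<in>G. t ^ num_orbits A C1)" by linarith
  hence le: "real r * real t ^ card C1 \<le> (\<Sum>A\<in>G. real t ^ num_orbits A C1)" by simp
  have eq: "real t ^ num_orbits A C1 = real t powi (int (num_orbits A C1) - int (card C1)) * real t ^ card C1" for A
  proof -
    have "real t powi (int (num_orbits A C1)) = real t powi ((int (num_orbits A C1) - int (card C1)) + int (card C1))" by simp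
    also have "\<dots> = real t powi (int (num_orbits A C1) - int (card C1)) * real t powi int (card C1)"
      by (rule power_int_add) (use t in simp)
    finally show ?thesis by simp
  qed
  have "(\<Sum>A\<in>G. real t ^ num_orbits A C1) = (\<Sum>A\<in>G. real t powi (int (num_orbits A C1) - int (card C1))) * real t ^ card C1"
    by (simp add: eq sum_distrib_right)
  also have "\<dots> < real r * real t ^ card C1"
    using S t by (intro mult_strict_right_mono) auto
  finally show False using le by linarith
qed


lemma recolor:
  assumes t: "t \<ge> 2" and col0: "col0 \<in> Cols t" and st: "\<forall>A\<in>Stab col0. A = id"
  shows "dist_chromatic_number V E \<le> num_colors V c + t - 1"
proof -
  define M where "M = Max (c ` V)"
  have cM: "v \<in> V \<Longrightarrow> c v \<le> M" for v unfolding M_def using finV by simp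
  have iM: "i \<le> M" using iV cM by blast
  have col0t: "v \<in> C1 \<Longrightarrow> col0 v < t" for v using col0 unfolding Cols_def by auto
  define c' where "c' = (\<lambda>v. if v \<in> C1 then (if col0 v = 0 then i else M + col0 v) else c v)"
  have inC1: "v \<in> C1 \<longleftrightarrow> v \<in> V \<and> c v = i" for v unfolding C1_def color_class_def by simp
  have keyC1: "v \<in> V \<Longrightarrow> (v \<in> C1 \<longleftrightarrow> c' v = i \<or> c' v > M)" for v
    using cM[of v] inC1[of v] unfolding c'_def by auto
  have proper: "proper_coloring V E c'"
    unfolding proper_coloring_def
  proof (intro ballI impI)
    fix u v assume uv: "u \<in> V" "v \<in> V" "E u v"
    have cuv: "c u \<noteq> c v" using pc uv unfolding proper_coloring_def by blast
    show "c' u \<noteq> c' v"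
    proof (cases "u \<in> C1"; cases "v \<in> C1")
      assume "u \<in> C1" "v \<in> C1" thus ?thesis using cuv inC1 by auto
    next
      assume "u \<in> C1" "v \<notin> C1"
      thus ?thesis using keyC1[OF uv(1)] keyC1[OF uv(2)] by auto
    next
      assume "u \<notin> C1" "v \<in> C1"
      thus ?thesis using keyC1[OF uv(1)] keyC1[OF uv(2)] by auto
    next
      assume "u \<notin> C1" "v \<notin> C1" thus ?thesis using cuv unfolding c'_def by simp
    qed
  qed
  have sub: "c' ` V \<subseteq> c ` V \<union> {M+1..<M+t}"
    using col0t C1V iV unfolding c'_def by (auto split: if_splits)
  have "num_colors V c' \<le> card (c ` V \<union> {M+1..<M+t})"
    unfolding num_colors_def by (rule card_mono) (use sub finV in auto)
  also have "\<dots> \<le> card (c ` V) + card {M+1..<M+t}" by (rule card_Un_le)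
  also have "\<dots> = num_colors V c + (t - 1)" unfolding num_colors_def using t by simp
  finally have nc: "num_colors V c' \<le> num_colors V c + t - 1" using t by simp
  have dist: "distinguishing V E c'"
    unfolding distinguishing_def
  proof (intro ballI impI)
    fix f assume f: "f \<in> aut V E" and pres: "\<forall>j\<in>c' ` V. f ` color_class V c' j = color_class V c' j"
    have bf: "bij_betw f V V" using f unfolding aut_def by blast
    have fc: "c' (f v) = c' v \<and> f v \<in> V" if v: "v \<in> V" for v
    proof -
      have "v \<in> color_class V c' (c' v)" using v unfolding color_class_def by simp
      hence "f v \<in> color_class V c' (c' v)" using pres v by blast
      thus ?thesis unfolding color_class_def by simp
    qed
    have fC1: "v \<in> V \<Longrightarrow> f v \<in> C1 \<longleftrightarrow> v \<in> C1" for v using keyC1 fc by metis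
    have "f ` C1 = C1"
    proof
      show "f ` C1 \<subseteq> C1" using fC1 C1V by auto
      show "C1 \<subseteq> f ` C1"
      proof
        fix w assume w: "w \<in> C1"
        then obtain v where v: "v \<in> V" "f v = w" using C1V bf by (metis bij_betw_imp_surj_on imageE subsetD)
        thus "w \<in> f ` C1" using fC1 w by auto
      qed
    qed
    hence fG: "f \<in> G" unfolding G_def using f by simp
    have "col0 (f v) = col0 v" if v: "v \<in> C1" for v
    proof -
      have vV: "v \<in> V" using v C1V by auto
      have fv: "f v \<in> C1" using fC1 vV v by simp
      have "c' (f v) = c' v" using fc vV by simp
      hence "(if col0 (f v) = 0 then i else M + col0 (f v)) = (if col0 v = 0 then i else M + col0 v)"
        using v fv unfolding c'_def by simp
      thus ?thesis using iM by (auto split: if_splits)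
    qed
    hence "f \<in> Stab col0" using fG unfolding Stab_def by simp
    thus "f = id" using st by blast
  qed
  have "dist_chromatic_number V E \<le> num_colors V c'"
    unfolding dist_chromatic_number_def using proper dist by (intro Least_le) blast
  thus ?thesis using nc by simp
qed


lemma orbit_bound:
  assumes A: "A \<in> G"
  shows "2 * num_orbits A C1 \<le> card C1 + card {v \<in> C1. A v = v}"
proof -
  define orb where "orb x = {(A ^^ k) x | k. True}" for x
  define Orb where "Orb = {orb x | x. x \<in> C1}"
  have th: "num_orbits A C1 = card Orb" unfolding num_orbits_def Orb_def orb_def by simp
  obtain n where n: "n > 0" "A ^^ n = id" using pow_id[OF finG idG compG A bijG[OF A]] by blast
  have idp: "(id::'a\<Rightarrow>'a) ^^ j = id" for j by (induction j) auto
  have self: "x \<in> orb x" for x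
  proof -
    have "(A ^^ 0) x \<in> orb x" unfolding orb_def by blast
    thus ?thesis by simp
  qed
  have sub: "orb y \<subseteq> orb x" if yx: "y \<in> orb x" for x y
  proof
    fix z assume "z \<in> orb y"
    then obtain k where "z = (A ^^ k) y" unfolding orb_def by blast
    moreover obtain j where "y = (A ^^ j) x" using yx unfolding orb_def by blast
    ultimately have "z = (A ^^ (k + j)) x" by (simp add: funpow_add)
    thus "z \<in> orb x" unfolding orb_def by blast
  qed
  have sym: "x \<in> orb y" if yx: "y \<in> orb x" for x y
  proof -
    obtain j where j: "y = (A ^^ j) x" using yx unfolding orb_def by blast
    have "(A ^^ (n * j - j)) y = (A ^^ (n * j - j + j)) x" using j by (simp add: funpow_add)
    also have "n * j - j + j = n * j" proof -
      have "j \<le> n * j" using n(1) by simp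
      thus ?thesis by simp
    qed
    also have "A ^^ (n * j) = id" using n(2) idp by (simp add: funpow_mult[symmetric])
    finally show ?thesis unfolding orb_def by auto
  qed
  have same: "orb y = orb x" if "y \<in> orb x" for x y
    using sub[OF that] sub[OF sym[OF that]] by blast
  have orbC1: "orb x \<subseteq> C1" if "x \<in> C1" for x using powC1[OF A that] unfolding orb_def by blast
  have finO: "finite Orb" unfolding Orb_def using finC1 by simp
  have finQ: "finite Q" if "Q \<in> Orb" for Q using that orbC1 finC1 finite_subset unfolding Orb_def by blast
  have disj: "pairwise disjnt Orb"
  proof (rule pairwiseI)
    fix P Q assume PQ: "P \<in> Orb" "Q \<in> Orb" "P \<noteq> Q"
    show "disjnt P Q"
    proof (rule ccontr)
      assume "\<not> disjnt P Q"
      then obtain z where z: "z \<in> P" "z \<in> Q" unfolding disjnt_def by blast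
      obtain x y where Px: "P = orb x" "Q = orb y" using PQ unfolding Orb_def by blast
      have "z \<in> orb x" using z(1) Px(1) by simp
      hence e1: "orb z = orb x" by (rule same)
      have "z \<in> orb y" using z(2) Px(2) by simp
      hence e2: "orb z = orb y" by (rule same)
      show False using PQ(3) Px e1 e2 by simp
    qed
  qed
  have UC: "\<Union>Orb = C1"
  proof
    show "\<Union>Orb \<subseteq> C1"
    proof
      fix z assume "z \<in> \<Union>Orb"
      then obtain Q where "Q \<in> Orb" "z \<in> Q" by blast
      then obtain x where "x \<in> C1" "Q = orb x" unfolding Orb_def by blast
      thus "z \<in> C1" using orbC1 \<open>z \<in> Q\<close> by blast
    qed
    show "C1 \<subseteq> \<Union>Orb"
    proof
      fix x assume "x \<in> C1"
      hence "orb x \<in> Orb" unfolding Orb_def by blast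
      thus "x \<in> \<Union>Orb" using self[of x] by blast
    qed
  qed
  have cardC1: "card C1 = (\<Sum>Q\<in>Orb. card Q)"
    using card_Union_disjoint[OF disj finQ] UC by simp
  define S1 where "S1 = {Q \<in> Orb. card Q = 1}"
  define R where "R = {Q \<in> Orb. card Q \<noteq> 1}"
  have OSR: "Orb = S1 \<union> R" "S1 \<inter> R = {}" unfolding S1_def R_def by auto
  have finS1: "finite S1" "finite R" using finO unfolding S1_def R_def by auto
  have e1: "(\<Sum>Q\<in>Orb. card Q) = (\<Sum>Q\<in>S1. card Q) + (\<Sum>Q\<in>R. card Q)"
    using OSR finS1 by (simp add: sum.union_disjoint)
  have e2: "(\<Sum>Q\<in>S1. card Q) = card S1"
  proof -
    have "(\<Sum>Q\<in>S1. card Q) = (\<Sum>Q\<in>S1. 1)"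
      by (rule sum.cong) (simp_all add: S1_def)
    thus ?thesis by simp
  qed
  have e3: "(\<Sum>Q\<in>R. card Q) \<ge> (\<Sum>Q\<in>R. 2)"
  proof (rule sum_mono)
    fix Q assume Q: "Q \<in> R"
    hence QO: "Q \<in> Orb" and Q1: "card Q \<noteq> 1" unfolding R_def by simp_all
    obtain x where x: "Q = orb x" using QO unfolding Orb_def by blast
    have "Q \<noteq> {}" using self[of x] x by blast
    hence "card Q \<noteq> 0" using finQ[OF QO] by simp
    thus "2 \<le> card Q" using Q1 by linarith
  qed
  have e4: "(\<Sum>Q\<in>R. (2::nat)) = 2 * card R" by simp
  have c1: "card C1 \<ge> card S1 + 2 * card R" using cardC1 e1 e2 e3 e4 by linarith
  have thSR: "card Orb = card S1 + card R" using OSR finS1 by (simp add: card_Un_disjoint)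
  have "S1 \<subseteq> (\<lambda>v. {v}) ` {v \<in> C1. A v = v}"
  proof
    fix Q assume "Q \<in> S1"
    hence Q: "Q \<in> Orb" "card Q = 1" unfolding S1_def by simp_all
    obtain x where x: "x \<in> C1" "Q = orb x" using Q(1) unfolding Orb_def by blast
    have xQ: "x \<in> Q" unfolding x(2) by (rule self)
    have "Q = {x}" using Q(2) xQ by (metis card_1_singletonE singletonD)
    moreover have "A x \<in> orb x"
    proof -
      have "(A ^^ 1) x \<in> orb x" unfolding orb_def by blast
      thus ?thesis by simp
    qed
    ultimately have "A x \<in> {x}" using x(2) by simp
    hence "A x = x" by simp
    thus "Q \<in> (\<lambda>v. {v}) ` {v \<in> C1. A v = v}" using x \<open>Q = {x}\<close> by blast
  qed
  hence "card S1 \<le> card ((\<lambda>v. {v}) ` {v \<in> C1. A v = v})"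
    by (rule card_mono[rotated]) (use finC1 in simp)
  also have "\<dots> \<le> card {v \<in> C1. A v = v}" by (rule card_image_le) (use finC1 in simp)
  finally have "card S1 \<le> card {v \<in> C1. A v = v}" .
  thus ?thesis using th thSR c1 by linarith
qed


lemma term_powr: "real t powi k = real t powr (real_of_int k)" if "t \<ge> 2" for k :: int
  by (rule powr_real_of_int'[symmetric]) (use that in auto)

lemma part2_sum:
  assumes t: "t \<ge> 2"
    and F: "real (Max {card {v \<in> C1. A v = v} | A. A \<in> G \<and> A \<noteq> id}) < real (card C1) - 2 * log (real t) (real (card G))"
  shows "(\<Sum>A\<in>G. real t powi (int (num_orbits A C1) - int (card C1))) < real r"
proof -
  define FS where "FS = {card {v \<in> C1. A v = v} | A. A \<in> G \<and> A \<noteq> id}"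
  define g where "g = card G"
  define n where "n = card C1"
  have g2: "g \<ge> 2" using cG g_def by simp
  have finFS: "finite FS" unfolding FS_def using finG by simp
  have t1: "real t > 1" using t by simp
  define T where "T A = real t powi (int (num_orbits A C1) - int (card C1))" for A
  have Tpow: "T A = real t powr (real (num_orbits A C1) - real n)" for A
    unfolding T_def n_def using term_powr[OF t] by simp
  have lo: "real (2 * num_orbits A C1) \<le> real (n + card {v \<in> C1. A v = v})" if "A \<in> G" for A
    using orbit_bound[OF that] n_def by linarith
  have small: "T A < 1 / real g" if A: "A \<in> G" "A \<noteq> id" for A
  proof -
    have "card {v \<in> C1. A v = v} \<in> FS" unfolding FS_def using A by blast
    hence "card {v \<in> C1. A v = v} \<le> Max FS" using finFS by simp
    hence "real (num_orbits A C1) - real n < - log (real t) (real g)"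
      using lo[OF A(1)] F unfolding FS_def[symmetric] g_def[symmetric] n_def[symmetric] by linarith
    hence "T A < real t powr (- log (real t) (real g))" unfolding Tpow using t1 by simp
    also have "\<dots> = 1 / real g" using t1 g2 by (simp add: powr_minus divide_inverse)
    finally show ?thesis .
  qed
  have Tid: "T id \<le> 1"
  proof -
    have "card {v \<in> C1. id v = v} \<le> n" unfolding n_def using finC1 by (intro card_mono) auto
    hence "real (num_orbits id C1) - real n \<le> 0" using lo[OF idG] by linarith
    hence "real t powr (real (num_orbits id C1) - real n) \<le> real t powr 0"
      using t1 by (simp only: powr_le_cancel_iff)
    thus ?thesis unfolding Tpow using t1 by simp
  qed
  have ne: "G - {id} \<noteq> {}"
  proof
    assume "G - {id} = {}"
    hence "G \<subseteq> {id}" by blast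
    hence "card G \<le> 1" using card_mono[of "{id}" G] by simp
    thus False using cG by simp
  qed
  have fin': "finite (G - {id})" using finG by simp
  have "(\<Sum>A\<in>G. T A) = T id + (\<Sum>A\<in>G - {id}. T A)" using finG idG by (simp add: sum.remove)
  also have "(\<Sum>A\<in>G - {id}. T A) < (\<Sum>A\<in>G - {id}. 1 / real g)"
    by (rule sum_strict_mono[OF fin' ne]) (use small in blast)
  also have "(\<Sum>A\<in>G - {id}. 1 / real g) = real (g - 1) / real g"
    using finG idG g_def by (simp add: card_Diff_singleton)
  also have "real (g - 1) / real g < 1" using g2 by simp
  finally have "(\<Sum>A\<in>G. T A) < 2" using Tid by linarith
  moreover have "real r \<ge> 2" using r_prime prime_ge_2_nat by simp
  ultimately show ?thesis unfolding T_def by linarith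
qed

end


theorem mainTheorem1:
  fixes V :: "'a set" and E :: "'a \<Rightarrow> 'a \<Rightarrow> bool" and c :: "'a \<Rightarrow> nat" and i :: nat
  assumes "graph V E"
    and "proper_coloring V E c"
    and "num_colors V c = chromatic_number V E"
    and "i \<in> c ` V"
  defines "C1 \<equiv> color_class V c i"
  defines "\<G> \<equiv> {A \<in> aut V E. A ` C1 = C1}"
  defines "r \<equiv> LEAST p::nat. prime p \<and> p dvd card \<G>"
  assumes "card \<G> \<ge> 2"
  shows "(\<forall>t::nat. t \<ge> 2 \<longrightarrow>
            (\<Sum>A\<in>\<G>. real t powi (int (num_orbits A C1) - int (card C1))) < real r \<longrightarrow>
            dist_chromatic_number V E \<le> chromatic_number V E + t - 1)
       \<and> (\<forall>t::nat. t \<ge> 2 \<longrightarrow>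
            real (Max {card {v \<in> C1. A v = v} | A. A \<in> \<G> \<and> A \<noteq> id})
              < real (card C1) - 2 * log (real t) (real (card \<G>)) \<longrightarrow>
            dist_chromatic_number V E \<le> chromatic_number V E + t - 1)"
proof -
  have C: "C1 = color_class V c i" unfolding C1_def by (rule refl)
  have G: "\<G> = {A \<in> aut V E. A ` C1 = C1}" unfolding \<G>_def by (rule refl)
  have R: "r = (LEAST p::nat. prime p \<and> p dvd card \<G>)" unfolding r_def by (rule refl)
  note ctx = assms(1,2,4) C G R assms(8)
  have P1: "\<forall>t::nat. t \<ge> 2 \<longrightarrow>
            (\<Sum>A\<in>\<G>. real t powi (int (num_orbits A C1) - int (card C1))) < real r \<longrightarrow>
            dist_chromatic_number V E \<le> chromatic_number V E + t - 1"
  proof (intro allI impI)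
    fix t :: nat assume t: "t \<ge> 2" and S: "(\<Sum>A\<in>\<G>. real t powi (int (num_orbits A C1) - int (card C1))) < real r"
    obtain col0 where col0: "col0 \<in> Cols C1 t" "\<forall>A\<in>Stab C1 \<G> col0. A = id"
      using exists_good[OF ctx t S] by blast
    show "dist_chromatic_number V E \<le> chromatic_number V E + t - 1"
      using recolor[OF ctx t col0] unfolding assms(3) .
  qed
  have P2: "\<forall>t::nat. t \<ge> 2 \<longrightarrow>
            real (Max {card {v \<in> C1. A v = v} | A. A \<in> \<G> \<and> A \<noteq> id})
              < real (card C1) - 2 * log (real t) (real (card \<G>)) \<longrightarrow>
            dist_chromatic_number V E \<le> chromatic_number V E + t - 1"
  proof (intro allI impI)
    fix t :: nat assume t: "t \<ge> 2"
      and F: "real (Max {card {v \<in> C1. A v = v} | A. A \<in> \<G> \<and> A \<noteq> id})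
              < real (card C1) - 2 * log (real t) (real (card \<G>))"
    have S: "(\<Sum>A\<in>\<G>. real t powi (int (num_orbits A C1) - int (card C1))) < real r"
      by (rule part2_sum[OF ctx t F])
    show "dist_chromatic_number V E \<le> chromatic_number V E + t - 1"
      by (rule P1[rule_format, OF t S])
  qed
  show ?thesis using P1 P2 by (rule conjI)
qed

end
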